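(* In $\mathbb{C}^3$ let $|l_a\rangle=(\sin\theta\cos\varphi_a,\sin\theta\sin\varphi_a,\cos\theta)$ for $a=1,\dots,5$, with $\varphi_a=4\pi a/5$ and $\cos\theta=5^{-1/4}$, so that $\langle l_a|l_{a\oplus1}\rangle=0$ (indices mod 5). Then the planes $\mathrm{span}\{|l_2\rangle,|l_3\rangle\}$ and $\mathrm{span}\{|l_4\rangle,|l_5\rangle\}$ intersect in a ray; let $|\psi_2\rangle$ be a unit vector on it, let $|\chi\rangle$ be a unit vector orthogonal to $|l_2\rangle,|l_3\rangle$ and $|\chi'\rangle$ a unit vector orthogonal to $|l_4\rangle,|l_5\rangle$. Then $|\langle l_1|\psi_2\rangle|^2=1-\frac{2}{\sqrt5}>0$, while every function $v$ from the set of rays $\{|l_1\rangle,\dots,|l_5\rangle,|\chi\rangle,|\chi'\rangle,|\psi_2\rangle\}$ to $\{0,1\}$ which assigns value 1 to exactly one member of every orthogonal triple in this set, assigns value 1 to at most one member of every orthogonal pair in this set, and satisfies $v(|\psi_2\rangle)=1$, must satisfy $v(|l_1\rangle)=0$. *)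

theory Defs
  imports "HOL-Analysis.Analysis"
begin

definition mk3 :: "complex \<Rightarrow> complex \<Rightarrow> complex \<Rightarrow> complex ^ 3" where
  "mk3 x y z = (\<chi> i. if i = 1 then x else if i = 2 then y else z)"

text \<open>Hermitian inner product, antilinear in the first argument: bra-ket u v.\<close>
definition herm :: "complex ^ 3 \<Rightarrow> complex ^ 3 \<Rightarrow> complex" where
  "herm u v = (\<Sum>i\<in>UNIV. cnj (u $ i) * v $ i)"

definition cspan2 :: "complex ^ 3 \<Rightarrow> complex ^ 3 \<Rightarrow> (complex ^ 3) set" where
  "cspan2 u w = {a *s u + b *s w | a b. True}"

definition ray :: "complex ^ 3 \<Rightarrow> (complex ^ 3) set" where
  "ray u = {c *s u | c. True}"

definition orth_ray :: "(complex ^ 3) set \<Rightarrow> (complex ^ 3) set \<Rightarrow> bool" where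
  "orth_ray R Q \<longleftrightarrow> (\<forall>x\<in>R. \<forall>y\<in>Q. herm x y = 0)"

definition cth :: real where "cth = 5 powr (-1/4)"
definition sth :: real where "sth = sqrt (1 - cth\<^sup>2)"
definition phi :: "nat \<Rightarrow> real" where "phi a = 4 * pi * real a / 5"

definition l :: "nat \<Rightarrow> complex ^ 3" where
  "l a = mk3 (complex_of_real (sth * cos (phi a)))
             (complex_of_real (sth * sin (phi a)))
             (complex_of_real cth)"

definition admissible :: "(complex ^ 3) set set \<Rightarrow> ((complex ^ 3) set \<Rightarrow> nat) \<Rightarrow> bool" where
  "admissible S v \<longleftrightarrow>
     (\<forall>R\<in>S. v R \<in> {0, 1}) \<and>
     (\<forall>R1\<in>S. \<forall>R2\<in>S. \<forall>R3\<in>S.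
        R1 \<noteq> R2 \<and> R1 \<noteq> R3 \<and> R2 \<noteq> R3 \<and>
        orth_ray R1 R2 \<and> orth_ray R1 R3 \<and> orth_ray R2 R3 \<longrightarrow>
        v R1 + v R2 + v R3 = 1) \<and>
     (\<forall>R1\<in>S. \<forall>R2\<in>S. R1 \<noteq> R2 \<and> orth_ray R1 R2 \<longrightarrow> v R1 + v R2 \<le> 1)"

end

theory Submission imports Defs begin

lemma cos_pi5: "cos (pi/5) = (1 + sqrt 5)/4"
proof -
  define c where "c = cos (pi/5)"
  have c0: "c > 0" unfolding c_def using pi_gt_zero by (intro cos_gt_zero_pi) linarith+
  have "cos (3*(pi/5)) = 4*c^3 - 3*c" unfolding c_def by (rule cos_treble_cos)
  moreover have "cos (3*(pi/5)) = - cos (2*(pi/5))"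
    using cos_pi_minus[of "2*(pi/5)"] by (simp add: field_simps)
  moreover have "cos (2*(pi/5)) = 2*c^2 - 1" unfolding c_def by (rule cos_double_cos)
  ultimately have "4*c^3 + 2*c^2 - 3*c - 1 = 0" by simp
  hence "(c+1)*(4*c^2 - 2*c - 1) = 0" by (simp add: algebra_simps power2_eq_square power3_eq_cube)
  hence e: "4*c^2 - 2*c - 1 = 0" using c0 by simp
  have s5: "sqrt 5 * sqrt 5 = 5" by simp
  have "(c - (1 + sqrt 5)/4) * (c - (1 - sqrt 5)/4) = (4*c^2 - 2*c - 1)/4"
    by (simp add: algebra_simps power2_eq_square s5 add_divide_distrib diff_divide_distrib)
  hence "(c - (1 + sqrt 5)/4) * (c - (1 - sqrt 5)/4) = 0" using e by simp
  hence "c = (1+sqrt 5)/4 \<or> c = (1 - sqrt 5)/4" by simp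
  moreover have "1 < sqrt 5" by simp
  ultimately show ?thesis using c0 unfolding c_def by fastforce
qed

lemma cos_2pi5: "cos (2*pi/5) = (sqrt 5 - 1)/4"
proof -
  have "cos (2*(pi/5)) = 2 * cos (pi/5)^2 - 1" by (rule cos_double_cos)
  also have "... = (sqrt 5 - 1)/4" unfolding cos_pi5 by (simp add: power2_eq_square algebra_simps)
  finally show ?thesis by simp
qed

lemma cth2: "cth^2 = 1 / sqrt 5"
proof -
  have "cth^2 = 5 powr (-1/4) * 5 powr (-1/4)" by (simp add: cth_def power2_eq_square)
  also have "... = 5 powr (-1/4 + -1/4)" by (rule powr_add[symmetric])
  also have "(-1/4 + -1/4::real) = - (1/2)" by simp
  also have "(5::real) powr (- (1/2)) = inverse (5 powr (1/2))" by (rule powr_minus)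
  also have "(5::real) powr (1/2) = sqrt 5" by (rule powr_half_sqrt) simp
  finally show ?thesis by (simp add: divide_inverse)
qed

lemma sth2: "sth^2 = 1 - 1 / sqrt 5"
proof -
  have "1 / sqrt 5 \<le> 1" by simp
  thus ?thesis by (simp add: sth_def cth2)
qed

lemma herm_l0: "herm (l i) (l j) = complex_of_real ((sth * cos(phi i))*(sth * cos(phi j)) + (sth * sin(phi i))*(sth * sin(phi j)) + cth*cth)"
  unfolding herm_def sum_3 l_def mk3_def by simp
lemma herm_l: "herm (l i) (l j) = complex_of_real (sth^2 * cos (phi i - phi j) + cth^2)"
  unfolding herm_l0 by (simp add: cos_diff power2_eq_square algebra_simps)
lemma cos_k: "cos (phi i - phi j) = cos (4*pi*(real j - real i)/5)"
proof -
  have "phi i - phi j = - (4*pi*(real j - real i)/5)" unfolding phi_def by (simp add: field_simps)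
  thus ?thesis by (metis cos_minus)
qed

definition g :: real where "g = (sqrt 5 - 1)/2"

lemma cA: "sth^2 * (-(1 + sqrt 5)/4) + cth^2 = 0"
proof -
  have s5: "sqrt 5 * sqrt 5 = 5" by simp
  have "sqrt 5 > 0" by simp
  then show ?thesis unfolding sth2 cth2 using s5 by (simp add: field_simps)
qed

lemma cB: "sth^2 * ((sqrt 5 - 1)/4) + cth^2 = g"
proof -
  have s5: "sqrt 5 * sqrt 5 = 5" by simp
  have "sqrt 5 > 0" by simp
  then show ?thesis unfolding sth2 cth2 g_def using s5 by (simp add: field_simps)
qed

lemma c1: "cos (4*pi*1/5) = -(1 + sqrt 5)/4"
  using cos_pi_minus[of "pi/5"] cos_pi5 by (simp add: field_simps)
lemma c2: "cos (4*pi*2/5) = (sqrt 5 - 1)/4"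
  using cos_periodic[of "-(2*pi/5)"] cos_2pi5 by (simp add: field_simps)
lemma c3: "cos (4*pi*3/5) = (sqrt 5 - 1)/4"
  using cos_periodic[of "(2*pi/5)"] cos_2pi5 by (simp add: field_simps)
lemma c4: "cos (4*pi*4/5) = -(1 + sqrt 5)/4"
  using cos_periodic[of "pi + pi/5"] cos_periodic_pi2[of "pi/5"] cos_pi5 by (simp add: field_simps)


lemma herm_l_k: "herm (l i) (l j) = complex_of_real (sth^2 * cos (4*pi*(real j - real i)/5) + cth^2)"
  using herm_l cos_k by simp

lemma cosk_abs: "cos (4*pi*(-k)/5) = cos (4*pi*k/5)"
  by (metis cos_minus minus_divide_left mult_minus_right)

lemma Gadj1: "herm (l i) (l j) = 0" if "real j - real i = 1 \<or> real j - real i = 4"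
proof -
  have "cos (4*pi*(real j - real i)/5) = -(1 + sqrt 5)/4" using that c1 c4 by auto
  hence X: "sth^2 * cos (4*pi*(real j - real i)/5) + cth^2 = 0" using cA by (simp only:)
  show ?thesis unfolding herm_l_k X by simp
qed

lemma Gadj: "herm (l i) (l j) = 0" if "real j - real i = 1 \<or> real j - real i = 4 \<or> real i - real j = 1 \<or> real i - real j = 4"
proof -
  have "cos (4*pi*(real j - real i)/5) = -(1 + sqrt 5)/4"
  proof (cases "real j - real i = 1 \<or> real j - real i = 4")
    case True thus ?thesis using c1 c4 by auto
  next
    case False
    hence "real i - real j = 1 \<or> real i - real j = 4" using that by auto
    moreover have "cos (4*pi*(real j - real i)/5) = cos (4*pi*(real i - real j)/5)"
      using cosk_abs[of "real i - real j"] by simp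
    ultimately show ?thesis using c1 c4 by auto
  qed
  hence X: "sth^2 * cos (4*pi*(real j - real i)/5) + cth^2 = 0" using cA by (simp only:)
  show ?thesis unfolding herm_l_k X by simp
qed

lemma Gtwo: "herm (l i) (l j) = complex_of_real g" if "real j - real i = 2 \<or> real j - real i = 3 \<or> real i - real j = 2 \<or> real i - real j = 3"
proof -
  have "cos (4*pi*(real j - real i)/5) = (sqrt 5 - 1)/4"
  proof (cases "real j - real i = 2 \<or> real j - real i = 3")
    case True thus ?thesis using c2 c3 by auto
  next
    case False
    hence "real i - real j = 2 \<or> real i - real j = 3" using that by auto
    moreover have "cos (4*pi*(real j - real i)/5) = cos (4*pi*(real i - real j)/5)"
      using cosk_abs[of "real i - real j"] by simp
    ultimately show ?thesis using c2 c3 by auto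
  qed
  hence X: "sth^2 * cos (4*pi*(real j - real i)/5) + cth^2 = g" using cB by (simp only:)
  show ?thesis unfolding herm_l_k X by simp
qed

lemma Gdiag: "herm (l i) (l i) = 1"
  unfolding herm_l_k by (simp add: sth2 cth2)

lemma herm_add_right: "herm u (v + w) = herm u v + herm u w"
  by (simp add: herm_def algebra_simps sum.distrib)
lemma herm_add_left: "herm (u + v) w = herm u w + herm v w"
  by (simp add: herm_def algebra_simps sum.distrib)
lemma herm_diff_right: "herm u (v - w) = herm u v - herm u w"
  by (simp add: herm_def algebra_simps sum_subtractf)
lemma herm_diff_left: "herm (u - v) w = herm u w - herm v w"
  by (simp add: herm_def algebra_simps sum_subtractf)
lemma herm_scale_right: "herm u (c *s v) = c * herm u v"
  by (simp add: herm_def algebra_simps sum_distrib_left)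
lemma herm_scale_left: "herm (c *s u) v = cnj c * herm u v"
  by (simp add: herm_def algebra_simps sum_distrib_left)
lemma herm_cnj: "herm v u = cnj (herm u v)"
  by (simp add: herm_def mult.commute)
lemma herm_zero: "herm u u = 0 \<Longrightarrow> u = 0"
proof -
  assume h: "herm u u = 0"
  have e: "herm u u = complex_of_real (\<Sum>i\<in>UNIV. (cmod (u $ i))^2)"
    unfolding herm_def of_real_sum by (rule sum.cong, simp, metis complex_norm_square mult.commute)
  hence "(\<Sum>i\<in>UNIV. (cmod (u $ i))^2) = 0" using h of_real_eq_0_iff by metis
  hence "\<forall>i\<in>UNIV. (cmod (u $ i))^2 = 0" by (subst sum_nonneg_eq_0_iff[symmetric]) auto
  thus "u = 0" by (simp add: vec_eq_iff)
qed


lemma g_pos: "g > 0" unfolding g_def by simp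
lemma g_eq: "g*g = 1 - g"
proof -
  have s5: "sqrt 5 * sqrt 5 = 5" by simp
  have "(sqrt 5 - 1)*(sqrt 5 - 1) = 6 - 2 * sqrt 5" by (simp add: algebra_simps s5)
  thus ?thesis unfolding g_def by (simp add: field_simps)
qed

abbreviation G :: complex where "G \<equiv> complex_of_real g"
lemma G_eq: "G*G = 1 - G" by (metis g_eq of_real_1 of_real_diff of_real_mult)
lemma G_ne: "G \<noteq> 0" using g_pos by simp

lemmas Gram = Gdiag
  Gadj[of 1 2, simplified] Gadj[of 2 1, simplified] Gadj[of 2 3, simplified] Gadj[of 3 2, simplified]
  Gadj[of 3 4, simplified] Gadj[of 4 3, simplified] Gadj[of 4 5, simplified] Gadj[of 5 4, simplified]
  Gadj[of 1 5, simplified] Gadj[of 5 1, simplified]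
  Gtwo[of 1 3, simplified] Gtwo[of 3 1, simplified] Gtwo[of 1 4, simplified] Gtwo[of 4 1, simplified]
  Gtwo[of 2 4, simplified] Gtwo[of 4 2, simplified] Gtwo[of 2 5, simplified] Gtwo[of 5 2, simplified]
  Gtwo[of 3 5, simplified] Gtwo[of 5 3, simplified]

lemmas hsimps = herm_add_left herm_add_right herm_diff_left herm_diff_right herm_scale_left herm_scale_right

definition w :: "complex ^ 3" where "w = l 2 + G *s l 3"

lemma w_alt: "w = G *s l 4 + l 5"
proof -
  define u where "u = w - (G *s l 4 + l 5)"
  have "herm u u = 2 * (1 - G - G*G)"
    unfolding u_def w_def by (simp add: hsimps Gram algebra_simps)
  also have "... = 0" using G_eq by simp
  finally have "u = 0" by (rule herm_zero)
  thus ?thesis unfolding u_def by simp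
qed

lemma ww: "herm w w = 1 + G*G"
  unfolding w_def by (simp add: hsimps Gram algebra_simps)

lemma w_ne: "w \<noteq> 0"
proof
  assume "w = 0"
  hence "herm w w = 0" by (simp add: herm_def)
  moreover have "1 + g*g > 0" using zero_le_square[of g] by linarith
  ultimately show False unfolding ww by (metis of_real_1 of_real_add of_real_mult of_real_eq_0_iff less_irrefl)
qed

lemma l1w: "herm (l 1) w = G*G"
  unfolding w_def by (simp add: hsimps Gram)

lemma inter_eq: "cspan2 (l 2) (l 3) \<inter> cspan2 (l 4) (l 5) = ray w"
proof
  show "cspan2 (l 2) (l 3) \<inter> cspan2 (l 4) (l 5) \<subseteq> ray w"
  proof
    fix x assume "x \<in> cspan2 (l 2) (l 3) \<inter> cspan2 (l 4) (l 5)"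
    then obtain a b c d where x1: "x = a *s l 2 + b *s l 3" and x2: "x = c *s l 4 + d *s l 5"
      unfolding cspan2_def by blast
    have e2: "a = c*G + d*G" using arg_cong[OF x1, of "herm (l 2)"] x2 by (simp add: hsimps Gram)
    have e3: "b = d*G" using arg_cong[OF x1, of "herm (l 3)"] x2 by (simp add: hsimps Gram)
    have e4: "a*G = c" using arg_cong[OF x1, of "herm (l 4)"] x2 by (simp add: hsimps Gram)
    have e5: "a*G + b*G = d" using arg_cong[OF x1, of "herm (l 5)"] x2 by (simp add: hsimps Gram)
    have "a*G*G = a*(1-G)" using G_eq by (simp add: mult.assoc)
    hence "a*G = d*G" using e2 e4 by algebra
    hence ad: "a = d" using G_ne by simp
    have "x = a *s w" unfolding x1 w_def using e3 ad
      by (simp add: vec_eq_iff algebra_simps)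
    thus "x \<in> ray w" unfolding ray_def by blast
  qed
next
  show "ray w \<subseteq> cspan2 (l 2) (l 3) \<inter> cspan2 (l 4) (l 5)"
  proof
    fix x assume "x \<in> ray w"
    then obtain e where x: "x = e *s w" unfolding ray_def by blast
    have "x = e *s l 2 + (e*G) *s l 3" unfolding x w_def by (simp add: vec_eq_iff algebra_simps)
    moreover have "x = (e*G) *s l 4 + e *s l 5" unfolding x w_alt by (simp add: vec_eq_iff algebra_simps)
    ultimately show "x \<in> cspan2 (l 2) (l 3) \<inter> cspan2 (l 4) (l 5)" unfolding cspan2_def by blast
  qed
qed


lemma orth_rays: "herm u v = 0 \<Longrightarrow> orth_ray (ray u) (ray v)"
  unfolding orth_ray_def ray_def by (auto simp: hsimps)

lemma ray_neq: assumes "herm u v = 0" "u \<noteq> 0" shows "ray u \<noteq> ray v"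
proof
  assume "ray u = ray v"
  moreover have "u \<in> ray u" unfolding ray_def by (rule CollectI, rule exI[of _ 1]) simp
  ultimately obtain c where "u = c *s v" unfolding ray_def by blast
  hence "herm u u = c * herm u v" by (metis herm_scale_right)
  hence "herm u u = 0" using assms by simp
  thus False using assms herm_zero by blast
qed

lemma ne_of_herm1: "herm u u = 1 \<Longrightarrow> u \<noteq> 0"
  by (auto simp: herm_def)

lemma l_ne: "l i \<noteq> 0" using Gdiag ne_of_herm1 by blast

lemma final_real: assumes "x * (1 + g*g) = 1" shows "x * g^4 = 1 - 2 / sqrt 5"
proof -
  have s5: "sqrt 5 * sqrt 5 = 5" by simp
  have r0: "sqrt 5 > 0" by simp
  have h1: "1 + g*g = 2 - g" using g_eq by simp
  have h4: "g^4 = (1-g)*(1-g)" using g_eq by (simp add: power4_eq_xxxx mult.assoc[symmetric])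
  have gl: "g < 1" using g_eq g_pos mult_pos_pos[OF g_pos g_pos] by linarith
  have nz: "2 - g \<noteq> 0" using gl by simp
  have "x * (2 - g) = 1" using assms h1 by simp
  hence x: "x = 1 / (2 - g)" using nz by (simp add: field_simps)
  have "(1-g)*(1-g) = (1 - 2 / sqrt 5) * (2 - g)"
  proof -
    have a: "(1-g)*(1-g) = (14 - 6 * sqrt 5)/4" unfolding g_def by (simp add: algebra_simps s5 field_simps)
    have b: "(1 - 2 / sqrt 5) * (2 - g) = (14 - 6 * sqrt 5)/4" unfolding g_def using r0
      by (simp add: field_simps s5 algebra_simps)
    show ?thesis using a b by simp
  qed
  moreover note nz
  ultimately show ?thesis unfolding x h4 by (simp add: field_simps)
qed

theorem mainTheorem6:
  shows "(\<forall>a\<in>{1..5::nat}. herm (l a) (l (a mod 5 + 1)) = 0) \<and>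
    (\<exists>w. w \<noteq> 0 \<and> cspan2 (l 2) (l 3) \<inter> cspan2 (l 4) (l 5) = ray w) \<and>
    (\<forall>\<psi> chi chi'.
       \<psi> \<in> cspan2 (l 2) (l 3) \<inter> cspan2 (l 4) (l 5) \<and> herm \<psi> \<psi> = 1 \<and>
       herm (l 2) chi = 0 \<and> herm (l 3) chi = 0 \<and> herm chi chi = 1 \<and>
       herm (l 4) chi' = 0 \<and> herm (l 5) chi' = 0 \<and> herm chi' chi' = 1 \<longrightarrow>
       (cmod (herm (l 1) \<psi>))\<^sup>2 = 1 - 2 / sqrt 5 \<and> 1 - 2 / sqrt 5 > 0 \<and>
       (\<forall>v. admissible (ray ` {l 1, l 2, l 3, l 4, l 5, chi, chi', \<psi>}) v \<and>
            v (ray \<psi>) = 1 \<longrightarrow> v (ray (l 1)) = 0))"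
proof (intro conjI allI impI)
  show "\<forall>a\<in>{1..5::nat}. herm (l a) (l (a mod 5 + 1)) = 0"
  proof
    fix a :: nat assume "a \<in> {1..5}"
    hence "a < 5 \<or> a = 5" by auto
    thus "herm (l a) (l (a mod 5 + 1)) = 0"
    proof
      assume "a < 5" thus ?thesis by (intro Gadj) simp
    next
      assume "a = 5" thus ?thesis by (intro Gadj) simp
    qed
  qed
  show "\<exists>w. w \<noteq> 0 \<and> cspan2 (l 2) (l 3) \<inter> cspan2 (l 4) (l 5) = ray w"
    using w_ne inter_eq by blast
next
  fix \<psi> chi chi'
  assume H: "\<psi> \<in> cspan2 (l 2) (l 3) \<inter> cspan2 (l 4) (l 5) \<and> herm \<psi> \<psi> = 1 \<and>
       herm (l 2) chi = 0 \<and> herm (l 3) chi = 0 \<and> herm chi chi = 1 \<and>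
       herm (l 4) chi' = 0 \<and> herm (l 5) chi' = 0 \<and> herm chi' chi' = 1"
  then obtain e where e: "\<psi> = e *s w" using inter_eq unfolding ray_def by blast
  have nn: "cnj e * e = complex_of_real ((cmod e)^2)" by (metis complex_norm_square mult.commute)
  have "herm \<psi> \<psi> = cnj e * e * (1 + G*G)" unfolding e by (simp add: hsimps ww mult.assoc)
  hence "complex_of_real ((cmod e)^2 * (1 + g*g)) = 1" using H nn by simp
  hence E: "(cmod e)^2 * (1 + g*g) = 1" by (metis of_real_eq_1_iff)
  have "herm (l 1) \<psi> = e * (G*G)" by (simp only: e herm_scale_right l1w)
  hence "(cmod (herm (l 1) \<psi>))^2 = (cmod e)^2 * g^4"
    by (simp add: norm_mult power_mult_distrib power4_eq_xxxx power2_eq_square)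
  thus "(cmod (herm (l 1) \<psi>))\<^sup>2 = 1 - 2 / sqrt 5" using final_real[OF E] by simp
  have "2 < sqrt 5" by (simp add: real_less_rsqrt)
  thus "1 - 2 / sqrt 5 > 0" by simp
  fix v
  assume V: "admissible (ray ` {l 1, l 2, l 3, l 4, l 5, chi, chi', \<psi>}) v \<and> v (ray \<psi>) = 1"
  define S where "S = ray ` {l 1, l 2, l 3, l 4, l 5, chi, chi', \<psi>}"
  have mem: "ray (l 1) \<in> S" "ray (l 2) \<in> S" "ray (l 3) \<in> S" "ray (l 4) \<in> S" "ray (l 5) \<in> S"
    "ray chi \<in> S" "ray chi' \<in> S" "ray \<psi> \<in> S" unfolding S_def by auto
  have adm: "admissible S v" using V unfolding S_def by (rule conjunct1)
  note AD = adm[unfolded admissible_def]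
  have A1: "\<forall>R\<in>S. v R \<in> {0, 1}" using AD by (rule conjunct1)
  have A2': "\<forall>R1\<in>S. \<forall>R2\<in>S. \<forall>R3\<in>S.
        R1 \<noteq> R2 \<and> R1 \<noteq> R3 \<and> R2 \<noteq> R3 \<and>
        orth_ray R1 R2 \<and> orth_ray R1 R3 \<and> orth_ray R2 R3 \<longrightarrow>
        v R1 + v R2 + v R3 = 1" using AD by (rule conjunct1[OF conjunct2])
  have A3': "\<forall>R1\<in>S. \<forall>R2\<in>S. R1 \<noteq> R2 \<and> orth_ray R1 R2 \<longrightarrow> v R1 + v R2 \<le> 1"
    using AD by (rule conjunct2[OF conjunct2])
  have A2: "v R1 + v R2 + v R3 = 1" if "R1\<in>S" "R2\<in>S" "R3\<in>S"
       "R1 \<noteq> R2 \<and> R1 \<noteq> R3 \<and> R2 \<noteq> R3 \<and>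
        orth_ray R1 R2 \<and> orth_ray R1 R3 \<and> orth_ray R2 R3" for R1 R2 R3
    using A2' that by blast
  have A3: "v R1 + v R2 \<le> 1" if "R1\<in>S" "R2\<in>S" "R1 \<noteq> R2 \<and> orth_ray R1 R2" for R1 R2
    using A3' that by blast
  have chi_ne: "chi \<noteq> 0" "chi' \<noteq> 0" "\<psi> \<noteq> 0" using H ne_of_herm1 by auto
  have pc: "herm \<psi> chi = 0" unfolding e w_def using H by (simp add: hsimps)
  have pc': "herm \<psi> chi' = 0" unfolding e w_alt using H by (simp add: hsimps)
  have pair: "v (ray x) + v (ray y) \<le> 1" if "herm x y = 0" "x \<noteq> 0" "ray x \<in> S" "ray y \<in> S" for x y
    using A3[OF that(3,4)] that(1,2) ray_neq orth_rays by blast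
  have trip: "v (ray x) + v (ray y) + v (ray z) = 1"
    if "herm x y = 0" "herm x z = 0" "herm y z = 0" "x \<noteq> 0" "y \<noteq> 0"
       "ray x \<in> S" "ray y \<in> S" "ray z \<in> S" for x y z
    using A2[OF that(6,7,8)] that(1-5) ray_neq orth_rays by blast
  have v1: "v (ray chi) = 0" using pair[OF pc chi_ne(3) mem(8) mem(6)] V by simp
  have v2: "v (ray chi') = 0" using pair[OF pc' chi_ne(3) mem(8) mem(7)] V by simp
  have t1: "v (ray (l 2)) + v (ray (l 3)) = 1"
    using trip[of "l 2" "l 3" chi] H l_ne mem v1 by (simp add: Gram)
  have t2: "v (ray (l 4)) + v (ray (l 5)) = 1"
    using trip[of "l 4" "l 5" chi'] H l_ne mem v2 by (simp add: Gram)
  have p1: "v (ray (l 1)) + v (ray (l 2)) \<le> 1" using pair[of "l 1" "l 2"] l_ne mem by (simp add: Gram)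
  have p2: "v (ray (l 3)) + v (ray (l 4)) \<le> 1" using pair[of "l 3" "l 4"] l_ne mem by (simp add: Gram)
  have p3: "v (ray (l 5)) + v (ray (l 1)) \<le> 1" using pair[of "l 5" "l 1"] l_ne mem by (simp add: Gram)
  have "v (ray (l 1)) \<in> {0,1}" using A1 mem by blast
  thus "v (ray (l 1)) = 0" using t1 t2 p1 p2 p3 by auto
qed

end
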